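(* Let $y_1\neq 0$ be a real number and let $Y,Y'\in\mathfrak o(V,K)$, written in block form $$Y=\begin{pmatrix}a&-\widetilde e^{\,*}&0\\ \widetilde b&\widetilde Y&\widetilde e\\0&-\widetilde b^{\,*}&-a\end{pmatrix},\qquad Y'=\begin{pmatrix}a'&-(\widetilde e')^{*}&0\\ \widetilde b'&\widetilde Y'&\widetilde e'\\0&-(\widetilde b')^{*}&-a'\end{pmatrix}$$ with $a,a'\in\mathbb R$, $\widetilde b,\widetilde e,\widetilde b',\widetilde e'\in\mathbb R^n$ and $\widetilde Y,\widetilde Y'\in\mathfrak o(\widetilde V,\widetilde K)$. Then the special tuples $(Y,y_1e_1)$ and $(Y',y_1e_1)$ are equivalent if and only if there exists $\widetilde P\in O(\widetilde V,\widetilde K)$ with $\widetilde Y'=\widetilde P\,\widetilde Y\,\widetilde P^{-1}$.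
   Context: Let $n\ge 0$ be an integer and let $\widetilde K$ be a real symmetric $n\times n$ matrix with $\widetilde K^2=I_n$; let $\widetilde V=\mathbb R^n$, $\widetilde x^{\,*}=\widetilde x^{\,T}\widetilde K$, $O(\widetilde V,\widetilde K)=\{\widetilde P:\widetilde P^T\widetilde K\widetilde P=\widetilde K\}$, $\mathfrak o(\widetilde V,\widetilde K)=\{\widetilde X:\widetilde X^T\widetilde K+\widetilde K\widetilde X=0\}$. Let $V=\mathbb R^{n+2}$ with standard basis $e_1,\dots,e_{n+2}$ (the middle $n$ coordinates identified with $\widetilde V$), and let $K=\begin{pmatrix}0&0&1\\0&\widetilde K&0\\1&0&0\end{pmatrix}$ (block sizes $1,n,1$). For $x,w\in V$ write $x^*=x^TK$ and $L_{u,w}=u\,w^*-w\,u^*$. Let $O(V,K)=\{P:P^TKP=K\}$, $\mathfrak o(V,K)=\{X:X^TK+KX=0\}$ (every element of which has the block form displayed in the claim), $O(V,K)_{e_{n+2}}=\{P\in O(V,K):Pe_{n+2}=e_{n+2}\}$. A special tuple is a pair $(Y,y)$ with $Y\in\mathfrak o(V,K)$, $y\in V$. Two special tuples $(Y,y)$ and $(Y',y')$ are equivalent if there exist $P\in O(V,K)_{e_{n+2}}$, vectors $v,p\in V$ with $p^*(e_{n+2})=0$, and $v_0\in\mathbb R$ such that $Y'+L_{v,e_{n+2}}=P(Y+L_{p,y})P^{-1}$ and $y'=Py+v_0e_{n+2}$. *)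

theory Defs
  imports "Jordan_Normal_Form.Matrix"
begin

text \<open>Matrices are Jordan_Normal_Form matrices over the reals. Indices are 0-based:
  the standard basis vector e_1 of V is unit_vec (n+2) 0 and e_{n+2} is unit_vec (n+2) (n+1).\<close>

definition bigK :: "real mat \<Rightarrow> real mat" where
  "bigK Kt = (let n = dim_row Kt in
     mat (n+2) (n+2) (\<lambda>(i,j).
       if (i = 0 \<and> j = n+1) \<or> (i = n+1 \<and> j = 0) then 1
       else if 0 < i \<and> i \<le> n \<and> 0 < j \<and> j \<le> n then Kt $$ (i-1, j-1)
       else 0))"

definition cvec :: "real vec \<Rightarrow> real mat" where
  "cvec x = mat_of_cols (dim_vec x) [x]"

definition xstar :: "real mat \<Rightarrow> real vec \<Rightarrow> real mat" where
  "xstar K x = transpose_mat (cvec x) * K"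

text \<open>Components of the row vector x^* = x^T K, as a vector.\<close>
definition vstar :: "real mat \<Rightarrow> real vec \<Rightarrow> real vec" where
  "vstar K x = transpose_mat K *\<^sub>v x"

definition Lmat :: "real mat \<Rightarrow> real vec \<Rightarrow> real vec \<Rightarrow> real mat" where
  "Lmat K u w = cvec u * xstar K w - cvec w * xstar K u"

definition orth_group :: "real mat \<Rightarrow> real mat set" where
  "orth_group K = {P \<in> carrier_mat (dim_row K) (dim_row K). transpose_mat P * K * P = K}"

definition orth_alg :: "real mat \<Rightarrow> real mat set" where
  "orth_alg K = {X \<in> carrier_mat (dim_row K) (dim_row K). transpose_mat X * K + K * X = 0\<^sub>m (dim_row K) (dim_row K)}"

definition blockY :: "real mat \<Rightarrow> real \<Rightarrow> real vec \<Rightarrow> real vec \<Rightarrow> real mat \<Rightarrow> real mat" where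
  "blockY Kt a b e Yt = (let n = dim_row Kt in
     mat (n+2) (n+2) (\<lambda>(i,j).
       if i = 0 then (if j = 0 then a else if j \<le> n then - (vstar Kt e $ (j-1)) else 0)
       else if i \<le> n then (if j = 0 then b $ (i-1) else if j \<le> n then Yt $$ (i-1, j-1) else e $ (i-1))
       else (if j = 0 then 0 else if j \<le> n then - (vstar Kt b $ (j-1)) else - a)))"

definition equiv_tuple :: "real mat \<Rightarrow> real mat \<Rightarrow> real vec \<Rightarrow> real mat \<Rightarrow> real vec \<Rightarrow> bool" where
  "equiv_tuple Kt Y y Y' y' = (let n = dim_row Kt; K = bigK Kt; en = unit_vec (n+2) (n+1) in
     \<exists>P v p v0 Q. P \<in> orth_group K \<and> P *\<^sub>v en = en \<and>
        v \<in> carrier_vec (n+2) \<and> p \<in> carrier_vec (n+2) \<and>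
        (xstar K p * cvec en) $$ (0,0) = 0 \<and>
        Q \<in> carrier_mat (n+2) (n+2) \<and> P * Q = 1\<^sub>m (n+2) \<and> Q * P = 1\<^sub>m (n+2) \<and>
        Y' + Lmat K v en = P * (Y + Lmat K p y) * Q \<and>
        y' = P *\<^sub>v y + v0 \<cdot>\<^sub>v en)"

end

theory Submission imports Defs "Jordan_Normal_Form.Determinant" begin

lemma sum_split2: "(\<Sum>k<n+2. f k) = f 0 + (\<Sum>k<n. f (Suc k)) + (f (n+1) :: real)"
proof -
  have "(\<Sum>k<n+2. f k) = (\<Sum>k<Suc n. f k) + f (n+1)" by simp
  also have "(\<Sum>k<Suc n. f k) = f 0 + (\<Sum>k<n. f (Suc k))" by (rule sum.lessThan_Suc_shift)
  finally show ?thesis by simp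
qed

lemma mult_entry: "A \<in> carrier_mat m k \<Longrightarrow> B \<in> carrier_mat k l \<Longrightarrow> i < m \<Longrightarrow> j < l \<Longrightarrow>
  (A*B)$$(i,j) = (\<Sum>q<k. A$$(i,q) * B$$(q,j))"
  by (auto simp: scalar_prod_def lessThan_atLeast0 intro!: sum.cong)

lemma mult_vec_entry: "A \<in> carrier_mat m k \<Longrightarrow> v \<in> carrier_vec k \<Longrightarrow> i < m \<Longrightarrow>
  (A *\<^sub>v v)$i = (\<Sum>q<k. A$$(i,q) * v$q)"
  by (auto simp: scalar_prod_def lessThan_atLeast0 intro!: sum.cong)

lemma triple_entry: "A \<in> carrier_mat m m \<Longrightarrow> B \<in> carrier_mat m m \<Longrightarrow> C \<in> carrier_mat m m \<Longrightarrow> i < m \<Longrightarrow> j < m \<Longrightarrow>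
  (transpose_mat A * B * C)$$(i,j) = (\<Sum>k<m. \<Sum>l<m. A$$(k,i) * B$$(k,l) * C$$(l,j))"
proof -
  assume a: "A \<in> carrier_mat m m" "B \<in> carrier_mat m m" "C \<in> carrier_mat m m" "i < m" "j < m"
  have "(transpose_mat A * B * C)$$(i,j) = (\<Sum>l<m. (transpose_mat A * B)$$(i,l) * C$$(l,j))"
    using a by (intro mult_entry[of _ m m _ m]) auto
  also have "\<dots> = (\<Sum>l<m. (\<Sum>k<m. A$$(k,i) * B$$(k,l)) * C$$(l,j))"
    using a by (intro sum.cong refl, subst mult_entry[of _ m m _ m]) auto
  also have "\<dots> = (\<Sum>l<m. \<Sum>k<m. A$$(k,i) * B$$(k,l) * C$$(l,j))"
    by (simp add: sum_distrib_right)
  finally show ?thesis by (subst sum.swap) 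
qed

lemma Lmat_entry: assumes "K \<in> carrier_mat m m" "u \<in> carrier_vec m" "w \<in> carrier_vec m" "i < m" "j < m"
  shows "Lmat K u w $$ (i,j) = u$i * (vstar K w)$j - w$i * (vstar K u)$j"
  using assms
  by (auto simp: Lmat_def xstar_def cvec_def vstar_def scalar_prod_def lessThan_atLeast0 mat_of_cols_def mult.commute intro!: sum.cong)

lemma bigK_carrier: "dim_row Kt = n \<Longrightarrow> bigK Kt \<in> carrier_mat (n+2) (n+2)"
  by (simp add: bigK_def Let_def)

lemma bigK_entries: assumes "dim_row Kt = n"
  shows "bigK Kt $$ (0,0) = 0" "bigK Kt $$ (0,Suc n) = 1" "bigK Kt $$ (Suc n,0) = 1" "bigK Kt $$ (Suc n,Suc n) = 0"
   "k < n \<Longrightarrow> bigK Kt $$ (0,Suc k) = 0" "k < n \<Longrightarrow> bigK Kt $$ (Suc k,0) = 0"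
   "k < n \<Longrightarrow> bigK Kt $$ (Suc n,Suc k) = 0" "k < n \<Longrightarrow> bigK Kt $$ (Suc k,Suc n) = 0"
   "k < n \<Longrightarrow> l < n \<Longrightarrow> bigK Kt $$ (Suc k,Suc l) = Kt $$ (k,l)"
  using assms by (auto simp: bigK_def Let_def)

lemma bil: assumes "dim_row Kt = n" "P \<in> carrier_mat (n+2) (n+2)" "i < n+2" "j < n+2"
  shows "(transpose_mat P * bigK Kt * P)$$(i,j) = P$$(0,i)*P$$(n+1,j) + P$$(n+1,i)*P$$(0,j)
     + (\<Sum>k<n. \<Sum>l<n. P$$(Suc k,i)*Kt$$(k,l)*P$$(Suc l,j))"
proof -
  have "(transpose_mat P * bigK Kt * P)$$(i,j) = (\<Sum>k<n+2. \<Sum>l<n+2. P$$(k,i) * bigK Kt$$(k,l) * P$$(l,j))"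
    by (rule triple_entry) (use assms bigK_carrier in auto)
  also have "\<dots> = P$$(0,i)*P$$(n+1,j) + P$$(n+1,i)*P$$(0,j)
     + (\<Sum>k<n. \<Sum>l<n. P$$(Suc k,i)*Kt$$(k,l)*P$$(Suc l,j))"
    unfolding sum_split2 by (simp add: bigK_entries[OF assms(1)] sum.distrib cong: sum.cong_simp)
  finally show ?thesis .
qed

lemma fwd_P: assumes dK: "dim_row Kt = n" and P: "P \<in> carrier_mat (n+2) (n+2)"
  and orth: "transpose_mat P * bigK Kt * P = bigK Kt"
  and Pen: "P *\<^sub>v unit_vec (n+2) (n+1) = unit_vec (n+2) (n+1)"
  and y1: "y1 \<noteq> 0"
  and yeq: "y1 \<cdot>\<^sub>v unit_vec (n+2) 0 = P *\<^sub>v (y1 \<cdot>\<^sub>v unit_vec (n+2) 0) + v0 \<cdot>\<^sub>v unit_vec (n+2) (n+1)"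
  shows "\<And>i. i < n+2 \<Longrightarrow> P$$(i,0) = (if i = 0 then 1 else 0)"
    "\<And>i. i < n+2 \<Longrightarrow> P$$(i,Suc n) = (if i = Suc n then 1 else 0)"
    "\<And>j. j < n \<Longrightarrow> P$$(0,Suc j) = 0"
    "\<And>j. j < n \<Longrightarrow> P$$(Suc n,Suc j) = 0"
proof -
  have c1: "P$$(i,Suc n) = (if i = Suc n then 1 else 0)" if "i < n+2" for i
  proof -
    have "(P *\<^sub>v unit_vec (n+2) (n+1)) $ i = unit_vec (n+2) (n+1) $ i" using Pen by simp
    then show ?thesis using that P by simp
  qed
  have c0: "y1 * P$$(i,0) + v0 * (if i = Suc n then 1 else 0) = (if i = 0 then y1 else 0)" if "i < n+2" for i
  proof -
    have "(y1 \<cdot>\<^sub>v unit_vec (n+2) 0) $ i = (P *\<^sub>v (y1 \<cdot>\<^sub>v unit_vec (n+2) 0) + v0 \<cdot>\<^sub>v unit_vec (n+2) (n+1)) $ i"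
      using yeq by simp
    then show ?thesis using that P by (simp add: mult_mat_vec[OF P]) (auto split: if_splits)
  qed
  have c0': "P$$(i,0) = (if i = 0 then 1 else 0)" if "i < n+1" for i
    using c0[of i] that y1 by (auto split: if_splits)
  have Pcol: "P$$(Suc k,0) = 0" "P$$(Suc k,Suc n) = 0" if "k < n" for k
    using c0'[of "Suc k"] c1[of "Suc k"] that by auto
  have b00: "(transpose_mat P * bigK Kt * P)$$(0,0) = 0" using orth dK by (simp add: bigK_entries)
  then have "2 * P$$(Suc n,0) = 0"
    by (subst (asm) bil[OF dK P]) (use c0'[of 0] Pcol in auto)
  then have cz: "P$$(Suc n,0) = 0" by simp
  show col0: "P$$(i,0) = (if i = 0 then 1 else 0)" if "i < n+2" for i
    using c0' cz that by (cases "i = Suc n") auto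
  show "P$$(i,Suc n) = (if i = Suc n then 1 else 0)" if "i < n+2" for i using c1 that by auto
  fix j assume j: "j < n"
  have "(transpose_mat P * bigK Kt * P)$$(Suc j,0) = 0" using orth dK j by (simp add: bigK_entries)
  then show "P$$(Suc n,Suc j) = 0"
    by (subst (asm) bil[OF dK P]) (use j col0[of 0] cz Pcol in auto)
  have "(transpose_mat P * bigK Kt * P)$$(Suc j,Suc n) = 0" using orth dK j by (simp add: bigK_entries)
  then show "P$$(0,Suc j) = 0"
    by (subst (asm) bil[OF dK P]) (use j c1[of 0] c1[of "Suc n"] Pcol in auto)
qed

lemma mid_prod: fixes M P :: "real mat" assumes M: "M \<in> carrier_mat (n+2) (n+2)" and P: "P \<in> carrier_mat (n+2) (n+2)"
  and i: "i < n" and j: "j < n"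
  shows "(\<forall>k<n. P$$(0,Suc k) = 0 \<and> P$$(Suc n,Suc k) = 0) \<Longrightarrow>
     (M*P)$$(Suc i,Suc j) = (\<Sum>k<n. M$$(Suc i,Suc k) * P$$(Suc k,Suc j))"
   "(\<forall>k<n. P$$(Suc k,0) = 0 \<and> P$$(Suc k,Suc n) = 0) \<Longrightarrow>
     (P*M)$$(Suc i,Suc j) = (\<Sum>k<n. P$$(Suc i,Suc k) * M$$(Suc k,Suc j))"
proof -
  assume h: "\<forall>k<n. P$$(0,Suc k) = 0 \<and> P$$(Suc n,Suc k) = 0"
  have "(M*P)$$(Suc i,Suc j) = (\<Sum>k<n+2. M$$(Suc i,k) * P$$(k,Suc j))"
    by (rule mult_entry[OF M P]) (use i j in auto)
  also have "\<dots> = (\<Sum>k<n. M$$(Suc i,Suc k) * P$$(Suc k,Suc j))"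
    unfolding sum_split2 using h j by simp
  finally show "(M*P)$$(Suc i,Suc j) = (\<Sum>k<n. M$$(Suc i,Suc k) * P$$(Suc k,Suc j))" .
next
  assume h: "\<forall>k<n. P$$(Suc k,0) = 0 \<and> P$$(Suc k,Suc n) = 0"
  have "(P*M)$$(Suc i,Suc j) = (\<Sum>k<n+2. P$$(Suc i,k) * M$$(k,Suc j))"
    by (rule mult_entry[OF P M]) (use i j in auto)
  also have "\<dots> = (\<Sum>k<n. P$$(Suc i,Suc k) * M$$(Suc k,Suc j))"
    unfolding sum_split2 using h i by simp
  finally show "(P*M)$$(Suc i,Suc j) = (\<Sum>k<n. P$$(Suc i,Suc k) * M$$(Suc k,Suc j))" .
qed

lemma blockY_carrier: "dim_row Kt = n \<Longrightarrow> blockY Kt a b e Yt \<in> carrier_mat (n+2) (n+2)"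
  by (simp add: blockY_def Let_def)

lemma blockY_dims[simp]: "dim_row (blockY Kt a b e Yt) = dim_row Kt + 2" "dim_col (blockY Kt a b e Yt) = dim_row Kt + 2"
  by (simp_all add: blockY_def Let_def)

lemma blockY_mid: "dim_row Kt = n \<Longrightarrow> i < n \<Longrightarrow> j < n \<Longrightarrow> blockY Kt a b e Yt $$ (Suc i, Suc j) = Yt $$ (i,j)"
  by (simp add: blockY_def Let_def)

lemma vstar_unit: assumes "dim_row Kt = n" "m < n+2" "j < n+2"
  shows "vstar (bigK Kt) (c \<cdot>\<^sub>v unit_vec (n+2) m) $ j = c * bigK Kt $$ (m,j)"
  using assms bigK_carrier[OF assms(1)] unfolding vstar_def
  by (simp add: mult_mat_vec[of _ "n+2" "n+2"])

lemma Lmat_mid: assumes dK: "dim_row Kt = n" and u: "u \<in> carrier_vec (n+2)" and m: "m = 0 \<or> m = n+1"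
  and i: "i < n" and j: "j < n"
  shows "Lmat (bigK Kt) u (c \<cdot>\<^sub>v unit_vec (n+2) m) $$ (Suc i, Suc j) = 0"
proof -
  have "Lmat (bigK Kt) u (c \<cdot>\<^sub>v unit_vec (n+2) m) $$ (Suc i, Suc j) =
    u$(Suc i) * (vstar (bigK Kt) (c \<cdot>\<^sub>v unit_vec (n+2) m))$(Suc j) - (c \<cdot>\<^sub>v unit_vec (n+2) m)$(Suc i) * (vstar (bigK Kt) u)$(Suc j)"
    by (rule Lmat_entry) (use bigK_carrier[OF dK] u i j in auto)
  also have "\<dots> = 0" using m i j
    by (subst vstar_unit[OF dK]) (auto simp: bigK_entries[OF dK])
  finally show ?thesis .
qed


lemma cvec_carrier: "u \<in> carrier_vec m \<Longrightarrow> cvec u \<in> carrier_mat m 1"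
  unfolding cvec_def using mat_of_cols_carrier(1)[of "dim_vec u" "[u]"] by simp

lemma xstar_carrier: "K \<in> carrier_mat m m \<Longrightarrow> w \<in> carrier_vec m \<Longrightarrow> xstar K w \<in> carrier_mat 1 m"
  unfolding xstar_def by (rule mult_carrier_mat[of _ 1 m], unfold transpose_carrier_mat, rule cvec_carrier)

lemma Lmat_carrier: "K \<in> carrier_mat m m \<Longrightarrow> u \<in> carrier_vec m \<Longrightarrow> w \<in> carrier_vec m \<Longrightarrow> Lmat K u w \<in> carrier_mat m m"
  unfolding Lmat_def
  by (rule minus_carrier_mat, rule mult_carrier_mat[of _ m 1], rule cvec_carrier, assumption, rule xstar_carrier, assumption+)


lemma idx_cases: "i < n+2 \<Longrightarrow> (i = 0 \<Longrightarrow> P) \<Longrightarrow> (i = Suc n \<Longrightarrow> P) \<Longrightarrow> (\<And>k. k < n \<Longrightarrow> i = Suc k \<Longrightarrow> P) \<Longrightarrow> P"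
  by (cases i) (auto simp: less_Suc_eq)

definition bd :: "nat \<Rightarrow> real mat \<Rightarrow> real mat" where
  "bd n A = mat (n+2) (n+2) (\<lambda>(i,j). if i = 0 \<and> j = 0 then 1 else if i = n+1 \<and> j = n+1 then 1
     else if 0 < i \<and> i \<le> n \<and> 0 < j \<and> j \<le> n then A $$ (i-1,j-1) else 0)"

lemma bd_carrier: "bd n A \<in> carrier_mat (n+2) (n+2)" by (simp add: bd_def)
lemma bd_dims[simp]: "dim_row (bd n A) = n+2" "dim_col (bd n A) = n+2" by (simp_all add: bd_def)

lemma bd_entries:
  shows "bd n A $$ (0,0) = 1" "bd n A $$ (0,Suc n) = 0" "bd n A $$ (Suc n,0) = 0" "bd n A $$ (Suc n,Suc n) = 1"
   "k < n \<Longrightarrow> bd n A $$ (0,Suc k) = 0" "k < n \<Longrightarrow> bd n A $$ (Suc k,0) = 0"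
   "k < n \<Longrightarrow> bd n A $$ (Suc n,Suc k) = 0" "k < n \<Longrightarrow> bd n A $$ (Suc k,Suc n) = 0"
   "k < n \<Longrightarrow> l < n \<Longrightarrow> bd n A $$ (Suc k,Suc l) = A $$ (k,l)"
  by (auto simp: bd_def)

lemma bd_mult: assumes A: "A \<in> carrier_mat n n" and B: "B \<in> carrier_mat n n"
  shows "bd n A * bd n B = bd n (A * B)"
proof (rule eq_matI)
  fix i j assume "i < dim_row (bd n (A*B))" "j < dim_col (bd n (A*B))"
  then have i: "i < n+2" and j: "j < n+2" using bd_carrier[of n] by auto
  have e: "(bd n A * bd n B) $$ (i,j) = (\<Sum>k<n+2. bd n A $$ (i,k) * bd n B $$ (k,j))"
    by (rule mult_entry[OF bd_carrier bd_carrier i j])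
  show "(bd n A * bd n B) $$ (i,j) = bd n (A*B) $$ (i,j)"
    unfolding e sum_split2
    apply (rule idx_cases[OF i]; rule idx_cases[OF j])
    using A B by (auto simp: bd_entries mult_entry[OF A B] simp del: index_mult_mat(1) cong: sum.cong_simp)
qed (auto simp: bd_carrier)

lemma bd_one: "bd n (1\<^sub>m n) = 1\<^sub>m (n+2)"
  by (rule eq_matI) (auto simp: bd_def)

lemma bd_orth: assumes dK: "dim_row Kt = n" and Kt: "Kt \<in> carrier_mat n n" and A: "A \<in> carrier_mat n n"
  and o: "transpose_mat A * Kt * A = Kt"
  shows "transpose_mat (bd n A) * bigK Kt * bd n A = bigK Kt"
proof (rule eq_matI)
  fix i j assume "i < dim_row (bigK Kt)" "j < dim_col (bigK Kt)"
  then have i: "i < n+2" and j: "j < n+2" using bigK_carrier[OF dK] by auto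
  have t: "(\<Sum>k<n. \<Sum>l<n. A$$(k,i') * Kt$$(k,l) * A$$(l,j')) = Kt $$ (i',j')" if "i' < n" "j' < n" for i' j'
    using triple_entry[OF A Kt A that] o by simp
  show "(transpose_mat (bd n A) * bigK Kt * bd n A) $$ (i,j) = bigK Kt $$ (i,j)"
    unfolding bil[OF dK bd_carrier i j]
    apply (rule idx_cases[OF i]; rule idx_cases[OF j])
    by (auto simp: bd_entries bigK_entries[OF dK] t cong: sum.cong_simp)
qed (use bigK_carrier[OF dK] in auto)

lemma bd_e1: "bd n A *\<^sub>v unit_vec (n+2) 0 = unit_vec (n+2) 0"
  by (rule eq_vecI) (auto simp: bd_def)

lemma bd_en: "bd n A *\<^sub>v unit_vec (n+2) (n+1) = unit_vec (n+2) (n+1)"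
  by (rule eq_vecI) (auto simp: bd_def)


lemma blockY_entries: assumes "dim_row Kt = n"
  shows "blockY Kt a b e Yt $$ (0,0) = a" "blockY Kt a b e Yt $$ (0,Suc n) = 0"
   "blockY Kt a b e Yt $$ (Suc n,0) = 0" "blockY Kt a b e Yt $$ (Suc n,Suc n) = -a"
   "k < n \<Longrightarrow> blockY Kt a b e Yt $$ (0,Suc k) = - (vstar Kt e $ k)"
   "k < n \<Longrightarrow> blockY Kt a b e Yt $$ (Suc k,0) = b $ k"
   "k < n \<Longrightarrow> blockY Kt a b e Yt $$ (Suc n,Suc k) = - (vstar Kt b $ k)"
   "k < n \<Longrightarrow> blockY Kt a b e Yt $$ (Suc k,Suc n) = e $ k"
   "k < n \<Longrightarrow> l < n \<Longrightarrow> blockY Kt a b e Yt $$ (Suc k,Suc l) = Yt $$ (k,l)"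
  using assms by (auto simp: blockY_def Let_def)

lemma vstar_orth: assumes Kt: "Kt \<in> carrier_mat n n" "transpose_mat Kt = Kt" and Pt: "Pt \<in> carrier_mat n n"
  and o: "transpose_mat Pt * Kt * Pt = Kt" and x: "x \<in> carrier_vec n" and l: "l < n"
  shows "(\<Sum>k<n. vstar Kt (Pt *\<^sub>v x) $ k * Pt$$(k,l)) = vstar Kt x $ l"
proof -
  have w: "vstar Kt (Pt *\<^sub>v x) \<in> carrier_vec n" using Kt Pt x by (simp add: vstar_def)
  have "(\<Sum>k<n. vstar Kt (Pt *\<^sub>v x) $ k * Pt$$(k,l)) = (transpose_mat Pt *\<^sub>v vstar Kt (Pt *\<^sub>v x)) $ l"
    by (subst mult_vec_entry[of _ n n]) (use Pt w l in \<open>auto simp: mult.commute intro!: sum.cong\<close>)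
  also have "transpose_mat Pt *\<^sub>v vstar Kt (Pt *\<^sub>v x) = (transpose_mat Pt * Kt * Pt) *\<^sub>v x"
    unfolding vstar_def Kt(2) using Kt Pt x
    by (simp add: assoc_mult_mat_vec[of _ n n _ n])
  also have "\<dots> = vstar Kt x" using o Kt by (simp add: vstar_def)
  finally show ?thesis .
qed

lemma key: assumes dK: "dim_row Kt = n" and Kt: "Kt \<in> carrier_mat n n" "transpose_mat Kt = Kt"
  and Pt: "Pt \<in> carrier_mat n n" and o: "transpose_mat Pt * Kt * Pt = Kt"
  and Y: "Yt \<in> carrier_mat n n" "Yt' \<in> carrier_mat n n" and comm: "Yt' * Pt = Pt * Yt"
  and b: "b \<in> carrier_vec n" and e: "e \<in> carrier_vec n"
  shows "blockY Kt a (Pt *\<^sub>v b) (Pt *\<^sub>v e) Yt' * bd n Pt = bd n Pt * blockY Kt a b e Yt"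
proof (rule eq_matI)
  fix i j assume "i < dim_row (bd n Pt * blockY Kt a b e Yt)" "j < dim_col (bd n Pt * blockY Kt a b e Yt)"
  then have i: "i < n+2" and j: "j < n+2" using blockY_carrier[OF dK, of a b e Yt] by auto
  have e1: "(blockY Kt a (Pt *\<^sub>v b) (Pt *\<^sub>v e) Yt' * bd n Pt) $$ (i,j) =
     (\<Sum>k<n+2. blockY Kt a (Pt *\<^sub>v b) (Pt *\<^sub>v e) Yt' $$ (i,k) * bd n Pt $$ (k,j))"
    by (rule mult_entry[OF blockY_carrier[OF dK] bd_carrier i j])
  have e2: "(bd n Pt * blockY Kt a b e Yt) $$ (i,j) =
     (\<Sum>k<n+2. bd n Pt $$ (i,k) * blockY Kt a b e Yt $$ (k,j))"
    by (rule mult_entry[OF bd_carrier blockY_carrier[OF dK] i j])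
  have pv: "(Pt *\<^sub>v x) $ m = (\<Sum>k<n. Pt $$ (m,k) * x $ k)" if "x \<in> carrier_vec n" "m < n" for x m
    by (rule mult_vec_entry[OF Pt that(1) that(2)])
  have cm: "(\<Sum>k<n. Yt' $$ (m,k) * Pt $$ (k,l)) = (\<Sum>k<n. Pt $$ (m,k) * Yt $$ (k,l))" if "m < n" "l < n" for m l
    using mult_entry[OF Y(2) Pt that] mult_entry[OF Pt Y(1) that] comm by simp
  have vo: "(\<Sum>k<n. - (vstar Kt (Pt *\<^sub>v x) $ k * Pt$$(k,l))) = - vstar Kt x $ l" if "x \<in> carrier_vec n" "l < n" for x l
    using vstar_orth[OF Kt Pt o that] by (simp add: sum_negf)
  show "(blockY Kt a (Pt *\<^sub>v b) (Pt *\<^sub>v e) Yt' * bd n Pt) $$ (i,j) = (bd n Pt * blockY Kt a b e Yt) $$ (i,j)"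
    unfolding e1 e2 sum_split2
    apply (rule idx_cases[OF i]; rule idx_cases[OF j])
    using b e by (auto simp: bd_entries blockY_entries[OF dK] pv cm vo simp del: index_mult_mat_vec cong: sum.cong_simp)
qed (use dK in simp_all)


lemma vstar_Kt: assumes "Kt \<in> carrier_mat n n" "x \<in> carrier_vec n" "l < n"
  shows "vstar Kt x $ l = (\<Sum>q<n. Kt$$(q,l) * x$q)"
  unfolding vstar_def using assms by (subst mult_vec_entry[of _ n n]) auto

lemma vstar_bigK: assumes dK: "dim_row Kt = n" and w: "w \<in> carrier_vec (n+2)"
  shows "vstar (bigK Kt) w $ 0 = w $ Suc n" "vstar (bigK Kt) w $ Suc n = w $ 0"
    "l < n \<Longrightarrow> vstar (bigK Kt) w $ Suc l = (\<Sum>q<n. Kt$$(q,l) * w$(Suc q))"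
proof -
  have KC: "transpose_mat (bigK Kt) \<in> carrier_mat (n+2) (n+2)" using bigK_carrier[OF dK] by simp
  have g: "vstar (bigK Kt) w $ j = (\<Sum>q<n+2. bigK Kt $$ (q,j) * w$q)" if "j < n+2" for j
    unfolding vstar_def using that bigK_carrier[OF dK] by (subst mult_vec_entry[OF KC w that]) auto
  show "vstar (bigK Kt) w $ 0 = w $ Suc n" using g[of 0] unfolding sum_split2
    by (simp add: bigK_entries[OF dK] cong: sum.cong_simp)
  show "vstar (bigK Kt) w $ Suc n = w $ 0" using g[of "Suc n"] unfolding sum_split2
    by (simp add: bigK_entries[OF dK] cong: sum.cong_simp)
  show "l < n \<Longrightarrow> vstar (bigK Kt) w $ Suc l = (\<Sum>q<n. Kt$$(q,l) * w$(Suc q))"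
    using g[of "Suc l"] unfolding sum_split2
    by (simp add: bigK_entries[OF dK] cong: sum.cong_simp)
qed

lemma sum_ind: "k < (m::nat) \<Longrightarrow> (\<Sum>i = 0..<m. g i * (if i = k then 1 else (0::real))) = g k"
proof -
  assume "k < m"
  have "(\<Sum>i = 0..<m. g i * (if i = k then 1 else (0::real))) = (\<Sum>i = 0..<m. if i = k then g i else 0)"
    by (rule sum.cong) auto
  also have "\<dots> = (if k \<in> {0..<m} then g k else 0)" using sum.delta[of "{0..<m}" k g] by simp
  finally show ?thesis using \<open>k < m\<close> by simp
qed

lemma sum_ind2: "k < (m::nat) \<Longrightarrow> (\<Sum>i = 0..<m. (if i = k then 1 else (0::real)) * g i) = g k"
  using sum_ind[of k m g] by (simp add: mult.commute)

lemma xstar_unit: assumes K: "K \<in> carrier_mat m m" and p: "p \<in> carrier_vec m" and k: "k < m"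
  shows "(xstar K p * cvec (unit_vec m k)) $$ (0,0) = vstar K p $ k"
  using assms unfolding xstar_def cvec_def vstar_def
  by (simp add: scalar_prod_def mat_of_cols_def sum_ind sum_ind2) (rule sum.cong, auto)


lemma bigK_dims[simp]: "dim_row (bigK Kt) = dim_row Kt + 2" "dim_col (bigK Kt) = dim_row Kt + 2"
  by (simp_all add: bigK_def Let_def)

lemma Lmat_dims[simp]: "dim_row (Lmat K u w) = dim_vec w" "dim_col (Lmat K u w) = dim_col K"
  by (simp_all add: Lmat_def cvec_def xstar_def)

lemma Lp_lemma: assumes dK: "dim_row Kt = n" and Kt: "Kt \<in> carrier_mat n n" and y1: "y1 \<noteq> 0"
  and e: "e \<in> carrier_vec n" and e0: "e0 \<in> carrier_vec n"
  and p_def: "p = vec (n+2) (\<lambda>i. if i = 0 \<or> i = Suc n then 0 else ((1/y1) \<cdot>\<^sub>v (e0 - e)) $ (i - 1))"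
  shows "blockY Kt a b e Yt + Lmat (bigK Kt) p (y1 \<cdot>\<^sub>v unit_vec (n+2) 0) = blockY Kt a b e0 Yt"
proof (rule eq_matI)
  have pC: "p \<in> carrier_vec (n+2)" unfolding p_def by simp
  have yC: "y1 \<cdot>\<^sub>v unit_vec (n+2) 0 \<in> carrier_vec (n+2)" by simp
  have KC: "bigK Kt \<in> carrier_mat (n+2) (n+2)" by (rule bigK_carrier[OF dK])
  have LC: "Lmat (bigK Kt) p (y1 \<cdot>\<^sub>v unit_vec (n+2) 0) \<in> carrier_mat (n+2) (n+2)"
    by (rule Lmat_carrier[OF KC pC yC])
  fix i j assume "i < dim_row (blockY Kt a b e0 Yt)" "j < dim_col (blockY Kt a b e0 Yt)"
  then have i: "i < n+2" and j: "j < n+2" using dK by auto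
  have ent: "(blockY Kt a b e Yt + Lmat (bigK Kt) p (y1 \<cdot>\<^sub>v unit_vec (n+2) 0)) $$ (i,j) =
     blockY Kt a b e Yt $$ (i,j) + (p$i * (y1 * bigK Kt $$ (0,j)) - (y1 \<cdot>\<^sub>v unit_vec (n+2) 0)$i * vstar (bigK Kt) p $ j)"
  proof -
    have vu: "vstar (bigK Kt) (y1 \<cdot>\<^sub>v unit_vec (n+2) 0) $ j = y1 * bigK Kt $$ (0,j)" by (rule vstar_unit[OF dK _ j]) simp
    have "(blockY Kt a b e Yt + Lmat (bigK Kt) p (y1 \<cdot>\<^sub>v unit_vec (n+2) 0)) $$ (i,j) =
       blockY Kt a b e Yt $$ (i,j) + Lmat (bigK Kt) p (y1 \<cdot>\<^sub>v unit_vec (n+2) 0) $$ (i,j)"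
      by (rule index_add_mat(1)) (use LC i j in auto)
    then show ?thesis unfolding Lmat_entry[OF KC pC yC i j] vu .
  qed
  have p0: "p $ 0 = 0" "p $ Suc n = 0" unfolding p_def by auto
  have ps: "p $ Suc k = (e0 $ k - e $ k) / y1" if "k < n" for k using that e e0 unfolding p_def by simp
  have hs: "y1 * (\<Sum>q<n. Kt$$(q,l) * p$(Suc q)) = vstar Kt e0 $ l - vstar Kt e $ l" if l: "l < n" for l
  proof -
    have "y1 * (\<Sum>q<n. Kt$$(q,l) * p$(Suc q)) = (\<Sum>q<n. Kt$$(q,l) * e0$q - Kt$$(q,l) * e$q)"
      unfolding sum_distrib_left using y1 by (intro sum.cong refl) (simp add: ps field_simps)
    also have "\<dots> = vstar Kt e0 $ l - vstar Kt e $ l"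
      by (simp add: vstar_Kt[OF Kt e0 l] vstar_Kt[OF Kt e l] sum_subtractf)
    finally show ?thesis .
  qed
  have hs': "y1 * vstar (bigK Kt) p $ Suc l = vstar Kt e0 $ l - vstar Kt e $ l" if l: "l < n" for l
    using hs[OF l] vstar_bigK(3)[OF dK pC l] by simp
  show "(blockY Kt a b e Yt + Lmat (bigK Kt) p (y1 \<cdot>\<^sub>v unit_vec (n+2) 0)) $$ (i,j) = blockY Kt a b e0 Yt $$ (i,j)"
    unfolding ent
    apply (rule idx_cases[OF i]; rule idx_cases[OF j])
    using y1 p0 by (auto simp: blockY_entries[OF dK] bigK_entries[OF dK] vstar_bigK(1,2)[OF dK pC] ps hs')
qed (use dK in simp_all)

lemma Lv_lemma: assumes dK: "dim_row Kt = n" and Kt: "Kt \<in> carrier_mat n n"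
  and b': "b' \<in> carrier_vec n" and b0: "b0 \<in> carrier_vec n"
  and v_def: "v = vec (n+2) (\<lambda>i. if i = 0 then a - a' else if i = Suc n then 0 else (b0 - b') $ (i - 1))"
  shows "blockY Kt a' b' e' Yt' + Lmat (bigK Kt) v (unit_vec (n+2) (n+1)) = blockY Kt a b0 e' Yt'"
proof (rule eq_matI)
  have vC: "v \<in> carrier_vec (n+2)" unfolding v_def by simp
  have yC: "1 \<cdot>\<^sub>v unit_vec (n+2) (n+1) \<in> carrier_vec (n+2)" by simp
  have KC: "bigK Kt \<in> carrier_mat (n+2) (n+2)" by (rule bigK_carrier[OF dK])
  have LC: "Lmat (bigK Kt) v (1 \<cdot>\<^sub>v unit_vec (n+2) (n+1)) \<in> carrier_mat (n+2) (n+2)"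
    by (rule Lmat_carrier[OF KC vC yC])
  fix i j assume "i < dim_row (blockY Kt a b0 e' Yt')" "j < dim_col (blockY Kt a b0 e' Yt')"
  then have i: "i < n+2" and j: "j < n+2" using dK by auto
  have ent: "(blockY Kt a' b' e' Yt' + Lmat (bigK Kt) v (1 \<cdot>\<^sub>v unit_vec (n+2) (n+1))) $$ (i,j) =
     blockY Kt a' b' e' Yt' $$ (i,j) + (v$i * (1 * bigK Kt $$ (n+1,j)) - (1 \<cdot>\<^sub>v unit_vec (n+2) (n+1))$i * vstar (bigK Kt) v $ j)"
  proof -
    have vu: "vstar (bigK Kt) (1 \<cdot>\<^sub>v unit_vec (n+2) (n+1)) $ j = 1 * bigK Kt $$ (n+1,j)" by (rule vstar_unit[OF dK _ j]) simp
    have "(blockY Kt a' b' e' Yt' + Lmat (bigK Kt) v (1 \<cdot>\<^sub>v unit_vec (n+2) (n+1))) $$ (i,j) =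
       blockY Kt a' b' e' Yt' $$ (i,j) + Lmat (bigK Kt) v (1 \<cdot>\<^sub>v unit_vec (n+2) (n+1)) $$ (i,j)"
      by (rule index_add_mat(1)) (use LC i j in auto)
    then show ?thesis unfolding Lmat_entry[OF KC vC yC i j] vu .
  qed
  have v0: "v $ 0 = a - a'" "v $ Suc n = 0" unfolding v_def by auto
  have vs: "v $ Suc k = b0 $ k - b' $ k" if "k < n" for k using that b0 b' unfolding v_def by simp
  have hs: "(\<Sum>q<n. Kt$$(q,l) * v$(Suc q)) = vstar Kt b0 $ l - vstar Kt b' $ l" if l: "l < n" for l
  proof -
    have "(\<Sum>q<n. Kt$$(q,l) * v$(Suc q)) = (\<Sum>q<n. Kt$$(q,l) * b0$q - Kt$$(q,l) * b'$q)"
      by (intro sum.cong refl) (simp add: vs field_simps)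
    also have "\<dots> = vstar Kt b0 $ l - vstar Kt b' $ l"
      by (simp add: vstar_Kt[OF Kt b0 l] vstar_Kt[OF Kt b' l] sum_subtractf)
    finally show ?thesis .
  qed
  have hs': "vstar (bigK Kt) v $ Suc l = vstar Kt b0 $ l - vstar Kt b' $ l" if l: "l < n" for l
    using hs[OF l] vstar_bigK(3)[OF dK vC l] by simp
  have "(blockY Kt a' b' e' Yt' + Lmat (bigK Kt) v (1 \<cdot>\<^sub>v unit_vec (n+2) (n+1))) $$ (i,j) = blockY Kt a b0 e' Yt' $$ (i,j)"
    unfolding ent
    apply (rule idx_cases[OF i]; rule idx_cases[OF j])
    using v0 by (auto simp: blockY_entries[OF dK] bigK_entries[OF dK] vstar_bigK(1,2)[OF dK vC] vs hs')
  then show "(blockY Kt a' b' e' Yt' + Lmat (bigK Kt) v (unit_vec (n+2) (n+1))) $$ (i,j) = blockY Kt a b0 e' Yt' $$ (i,j)"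
    by simp
qed (use dK in simp_all)

lemma fwd:
  fixes Kt :: "real mat" and n :: nat
    and a a' y1 :: real and b e b' e' :: "real vec" and Yt Yt' :: "real mat"
  assumes Kt: "Kt \<in> carrier_mat n n" "transpose_mat Kt = Kt" "Kt * Kt = 1\<^sub>m n"
    and y1: "y1 \<noteq> 0"
    and Yt: "Yt \<in> orth_alg Kt" and Yt': "Yt' \<in> orth_alg Kt"
    and eqv: "equiv_tuple Kt (blockY Kt a b e Yt) (y1 \<cdot>\<^sub>v unit_vec (n+2) 0)
                        (blockY Kt a' b' e' Yt') (y1 \<cdot>\<^sub>v unit_vec (n+2) 0)"
  shows "\<exists>Pt \<in> orth_group Kt. \<exists>Qt. similar_mat_wit Yt' Yt Pt Qt"
proof -
  have dK: "dim_row Kt = n" using Kt by simp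
  have YtC: "Yt \<in> carrier_mat n n" "Yt' \<in> carrier_mat n n" using Yt Yt' dK by (auto simp: orth_alg_def)
  let ?K = "bigK Kt" and ?en = "unit_vec (n+2) (n+1)" and ?y = "y1 \<cdot>\<^sub>v unit_vec (n+2) 0"
  let ?Y = "blockY Kt a b e Yt" and ?Y' = "blockY Kt a' b' e' Yt'"
  from eqv obtain P v p v0 Q where P: "P \<in> orth_group ?K" and Pen: "P *\<^sub>v ?en = ?en"
    and v: "v \<in> carrier_vec (n+2)" and p: "p \<in> carrier_vec (n+2)"
    and Q: "Q \<in> carrier_mat (n+2) (n+2)" and PQ: "P * Q = 1\<^sub>m (n+2)" and QP: "Q * P = 1\<^sub>m (n+2)"
    and Meq: "?Y' + Lmat ?K v ?en = P * (?Y + Lmat ?K p ?y) * Q"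
    and yeq: "?y = P *\<^sub>v ?y + v0 \<cdot>\<^sub>v ?en"
    using eqv unfolding equiv_tuple_def Let_def dK by (elim exE conjE) (rule that, assumption+)
  have KC: "?K \<in> carrier_mat (n+2) (n+2)" by (rule bigK_carrier[OF dK])
  have PC: "P \<in> carrier_mat (n+2) (n+2)" and orth: "transpose_mat P * ?K * P = ?K"
    using P KC by (auto simp: orth_group_def)
  note PP = fwd_P[OF dK PC orth Pen y1 yeq]
  define M where "M = ?Y + Lmat ?K p ?y"
  define M' where "M' = ?Y' + Lmat ?K v ?en"
  have LC: "Lmat ?K u w \<in> carrier_mat (n+2) (n+2)" if "u \<in> carrier_vec (n+2)" "w \<in> carrier_vec (n+2)" for u w
    using that by (rule Lmat_carrier[OF KC])
  have MC: "M \<in> carrier_mat (n+2) (n+2)" unfolding M_def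
    by (rule add_carrier_mat, rule LC[OF p], simp)
  have M'C: "M' \<in> carrier_mat (n+2) (n+2)" unfolding M'_def 
    by (rule add_carrier_mat, rule LC[OF v], simp)
  have MP: "M' * P = P * M"
  proof -
    have "M' * P = P * M * Q * P" using Meq unfolding M_def[symmetric] M'_def[symmetric] by simp
    also have "\<dots> = P * M * (Q * P)" by (rule assoc_mult_mat[of _ "n+2" "n+2"]) (use PC MC Q in auto)
    also have "\<dots> = P * M" using QP PC MC by simp
    finally show ?thesis .
  qed
  define Pt where "Pt = mat n n (\<lambda>(i,j). P$$(Suc i, Suc j))"
  have PtC: "Pt \<in> carrier_mat n n" by (simp add: Pt_def)
  have Mmid: "M $$ (Suc i, Suc j) = Yt $$ (i,j)" "M' $$ (Suc i, Suc j) = Yt' $$ (i,j)" if ij: "i < n" "j < n" for i j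
  proof -
    have yC: "?y \<in> carrier_vec (n+2)" "?en \<in> carrier_vec (n+2)" by auto
    have d1: "dim_row (Lmat ?K p ?y) = n+2" "dim_col (Lmat ?K p ?y) = n+2" using LC[OF p yC(1)] by auto
    have d2: "dim_row (Lmat ?K v ?en) = n+2" "dim_col (Lmat ?K v ?en) = n+2" using LC[OF v yC(2)] by auto
    have "M $$ (Suc i, Suc j) = ?Y $$ (Suc i,Suc j) + Lmat ?K p ?y $$ (Suc i, Suc j)"
      unfolding M_def using ij d1 by (subst index_add_mat) auto
    also have "\<dots> = Yt $$ (i,j)" using blockY_mid[OF dK ij] Lmat_mid[OF dK p _ ij, of 0 y1] by simp
    finally show "M $$ (Suc i, Suc j) = Yt $$ (i,j)" .
    have "M' $$ (Suc i, Suc j) = ?Y' $$ (Suc i,Suc j) + Lmat ?K v ?en $$ (Suc i, Suc j)"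
      unfolding M'_def using ij d2 by (subst index_add_mat) auto
    also have "\<dots> = Yt' $$ (i,j)" using blockY_mid[OF dK ij] Lmat_mid[OF dK v _ ij, of "n+1" 1] by simp
    finally show "M' $$ (Suc i, Suc j) = Yt' $$ (i,j)" .
  qed
  have comm: "Yt' * Pt = Pt * Yt"
  proof (rule eq_matI)
    fix i j assume ij: "i < dim_row (Pt * Yt)" "j < dim_col (Pt * Yt)"
    then have i: "i < n" and j: "j < n" using PtC YtC by auto
    have "(Yt' * Pt) $$ (i,j) = (\<Sum>k<n. Yt'$$(i,k) * Pt$$(k,j))" by (rule mult_entry[OF YtC(2) PtC i j])
    also have "\<dots> = (M' * P) $$ (Suc i, Suc j)"
      by (subst mid_prod(1)[OF M'C PC i j]) (use PP i j Mmid in \<open>auto simp: Pt_def\<close>)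
    also have "\<dots> = (P * M) $$ (Suc i, Suc j)" using MP by simp
    also have "\<dots> = (\<Sum>k<n. Pt$$(i,k) * Yt$$(k,j))"
      by (subst mid_prod(2)[OF MC PC i j]) (use PP i j Mmid in \<open>auto simp: Pt_def\<close>)
    also have "\<dots> = (Pt * Yt) $$ (i,j)" by (rule mult_entry[OF PtC YtC(1) i j, symmetric])
    finally show "(Yt' * Pt) $$ (i,j) = (Pt * Yt) $$ (i,j)" .
  qed (use PtC YtC in auto)
  have Ptorth: "transpose_mat Pt * Kt * Pt = Kt"
  proof (rule eq_matI)
    fix i j assume ij: "i < dim_row Kt" "j < dim_col Kt"
    then have i: "i < n" and j: "j < n" using Kt by auto
    have "(transpose_mat Pt * Kt * Pt) $$ (i,j) = (\<Sum>k<n. \<Sum>l<n. Pt$$(k,i) * Kt$$(k,l) * Pt$$(l,j))"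
      by (rule triple_entry[OF PtC Kt(1) PtC i j])
    also have "\<dots> = (transpose_mat P * ?K * P) $$ (Suc i, Suc j)"
      by (subst bil[OF dK PC]) (use PP i j in \<open>auto simp: Pt_def intro!: sum.cong\<close>)
    also have "\<dots> = Kt $$ (i,j)" using orth i j by (simp add: bigK_entries[OF dK])
    finally show "(transpose_mat Pt * Kt * Pt) $$ (i,j) = Kt $$ (i,j)" .
  qed (use PtC Kt in auto)
  define Qt where "Qt = Kt * transpose_mat Pt * Kt"
  have QtC: "Qt \<in> carrier_mat n n" using Kt PtC by (simp add: Qt_def)
  have QtPt: "Qt * Pt = 1\<^sub>m n"
  proof -
    have "Qt * Pt = Kt * (transpose_mat Pt * Kt) * Pt" unfolding Qt_def
      by (subst assoc_mult_mat[of Kt n n _ n Kt n]) (use Kt PtC in auto)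
    also have "\<dots> = Kt * (transpose_mat Pt * Kt * Pt)"
      by (rule assoc_mult_mat[of _ n n _ n _ n]) (use Kt PtC in auto)
    finally have "Qt * Pt = Kt * (transpose_mat Pt * Kt * Pt)" .
    then show ?thesis using Ptorth Kt by simp
  qed
  have PtQt: "Pt * Qt = 1\<^sub>m n" by (rule mat_mult_left_right_inverse[OF QtC PtC QtPt])
  have "Yt' = Yt' * (Pt * Qt)" using PtQt YtC by simp
  also have "\<dots> = Yt' * Pt * Qt" using YtC PtC QtC by (simp add: assoc_mult_mat[of _ n n])
  also have "\<dots> = Pt * Yt * Qt" using comm by simp
  finally have "similar_mat_wit Yt' Yt Pt Qt"
    unfolding similar_mat_wit_def Let_def using YtC PtC QtC PtQt QtPt by auto
  moreover have "Pt \<in> orth_group Kt" using Ptorth PtC dK by (simp add: orth_group_def)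
  ultimately show ?thesis by blast
qed


lemma bwd:
  fixes Kt :: "real mat" and n :: nat
    and a a' y1 :: real and b e b' e' :: "real vec" and Yt Yt' :: "real mat"
  assumes Kt: "Kt \<in> carrier_mat n n" "transpose_mat Kt = Kt" "Kt * Kt = 1\<^sub>m n"
    and y1: "y1 \<noteq> 0"
    and vecs: "b \<in> carrier_vec n" "e \<in> carrier_vec n" "b' \<in> carrier_vec n" "e' \<in> carrier_vec n"
    and Yt: "Yt \<in> orth_alg Kt" and Yt': "Yt' \<in> orth_alg Kt"
    and Pt: "Pt \<in> orth_group Kt" and sim: "similar_mat_wit Yt' Yt Pt Qt"
  shows "equiv_tuple Kt (blockY Kt a b e Yt) (y1 \<cdot>\<^sub>v unit_vec (n+2) 0)
                        (blockY Kt a' b' e' Yt') (y1 \<cdot>\<^sub>v unit_vec (n+2) 0)"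
proof -
  have dK: "dim_row Kt = n" using Kt by simp
  have YtC: "Yt \<in> carrier_mat n n" "Yt' \<in> carrier_mat n n" using Yt Yt' dK by (auto simp: orth_alg_def)
  have PtC: "Pt \<in> carrier_mat n n" and o: "transpose_mat Pt * Kt * Pt = Kt" using Pt dK by (auto simp: orth_group_def)
  have QtC: "Qt \<in> carrier_mat n n" and PQt: "Pt * Qt = 1\<^sub>m n" and QPt: "Qt * Pt = 1\<^sub>m n"
    and Yeq: "Yt' = Pt * Yt * Qt"
    using sim YtC unfolding similar_mat_wit_def Let_def by auto
  have comm: "Yt' * Pt = Pt * Yt"
  proof -
    have "Yt' * Pt = Pt * Yt * (Qt * Pt)" unfolding Yeq
      by (rule assoc_mult_mat[of _ n n _ n]) (use PtC YtC QtC in auto)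
    then show ?thesis using QPt PtC YtC by simp
  qed
  define e0 where "e0 = Qt *\<^sub>v e'"
  have e0C: "e0 \<in> carrier_vec n" unfolding e0_def using QtC vecs by simp
  have Pe0: "Pt *\<^sub>v e0 = e'" unfolding e0_def using PtC QtC vecs PQt
    by (simp add: assoc_mult_mat_vec[symmetric, of _ n n _ n])
  define b0 where "b0 = Pt *\<^sub>v b"
  have b0C: "b0 \<in> carrier_vec n" unfolding b0_def using PtC vecs by simp
  define p where "p = vec (n+2) (\<lambda>i. if i = 0 \<or> i = Suc n then 0 else ((1/y1) \<cdot>\<^sub>v (e0 - e)) $ (i - 1))"
  define v where "v = vec (n+2) (\<lambda>i. if i = 0 then a - a' else if i = Suc n then 0 else (b0 - b') $ (i - 1))"
  have pC: "p \<in> carrier_vec (n+2)" and vC: "v \<in> carrier_vec (n+2)" unfolding p_def v_def by auto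
  let ?K = "bigK Kt" and ?en = "unit_vec (n+2) (n+1)" and ?y = "y1 \<cdot>\<^sub>v unit_vec (n+2) 0"
  let ?P = "bd n Pt" and ?Q = "bd n Qt"
  have LP: "blockY Kt a b e Yt + Lmat ?K p ?y = blockY Kt a b e0 Yt"
    by (rule Lp_lemma[OF dK Kt(1) y1 vecs(2) e0C p_def])
  have LV: "blockY Kt a' b' e' Yt' + Lmat ?K v ?en = blockY Kt a b0 e' Yt'"
    by (rule Lv_lemma[OF dK Kt(1) vecs(3) b0C v_def])
  have KY: "blockY Kt a b0 e' Yt' * ?P = ?P * blockY Kt a b e0 Yt"
    using key[OF dK Kt(1,2) PtC o YtC comm vecs(1) e0C, of a] unfolding b0_def Pe0 .
  have PQ: "?P * ?Q = 1\<^sub>m (n+2)" using bd_mult[OF PtC QtC] PQt bd_one by simp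
  have QP: "?Q * ?P = 1\<^sub>m (n+2)" using bd_mult[OF QtC PtC] QPt bd_one by simp
  have main: "blockY Kt a' b' e' Yt' + Lmat ?K v ?en = ?P * (blockY Kt a b e Yt + Lmat ?K p ?y) * ?Q"
  proof -
    have "blockY Kt a' b' e' Yt' + Lmat ?K v ?en = blockY Kt a b0 e' Yt' * (?P * ?Q)"
      unfolding LV PQ using right_mult_one_mat[OF blockY_carrier[OF dK, of a b0 e' Yt']] by simp
    also have "\<dots> = blockY Kt a b0 e' Yt' * ?P * ?Q"
      by (rule assoc_mult_mat[symmetric, of _ "n+2" "n+2" _ "n+2" _ "n+2"]) (use blockY_carrier[OF dK] bd_carrier in auto)
    also have "\<dots> = ?P * (blockY Kt a b e Yt + Lmat ?K p ?y) * ?Q" unfolding KY LP ..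
    finally show ?thesis .
  qed
  have porth: "?P \<in> orth_group ?K"
    using bd_orth[OF dK Kt(1) PtC o] bd_carrier[of n Pt] dK by (simp add: orth_group_def)
  have xs: "(xstar ?K p * cvec ?en) $$ (0,0) = 0"
    using xstar_unit[OF bigK_carrier[OF dK] pC, of "n+1"] vstar_bigK(2)[OF dK pC] by (simp add: p_def)
  have yy: "?y = ?P *\<^sub>v ?y + 0 \<cdot>\<^sub>v ?en"
  proof -
    have "?P *\<^sub>v ?y = ?y" using bd_e1[of n Pt] by (simp add: mult_mat_vec[OF bd_carrier])
    moreover have "?y = ?y + 0 \<cdot>\<^sub>v ?en" by (rule eq_vecI) auto
    ultimately show ?thesis by simp
  qed
  show ?thesis unfolding equiv_tuple_def Let_def dK
    apply (rule exI[of _ ?P], rule exI[of _ v], rule exI[of _ p], rule exI[of _ 0], rule exI[of _ ?Q])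
    using porth bd_en[of n Pt] vC pC xs bd_carrier[of n Qt] PQ QP main yy by auto
qed

theorem proposition6:
  fixes Kt :: "real mat" and n :: nat
    and a a' y1 :: real and b e b' e' :: "real vec" and Yt Yt' :: "real mat"
  assumes Kt: "Kt \<in> carrier_mat n n" "transpose_mat Kt = Kt" "Kt * Kt = 1\<^sub>m n"
    and y1: "y1 \<noteq> 0"
    and vecs: "b \<in> carrier_vec n" "e \<in> carrier_vec n" "b' \<in> carrier_vec n" "e' \<in> carrier_vec n"
    and Yt: "Yt \<in> orth_alg Kt" and Yt': "Yt' \<in> orth_alg Kt"
  shows "equiv_tuple Kt (blockY Kt a b e Yt) (y1 \<cdot>\<^sub>v unit_vec (n+2) 0)
                        (blockY Kt a' b' e' Yt') (y1 \<cdot>\<^sub>v unit_vec (n+2) 0)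
         \<longleftrightarrow> (\<exists>Pt \<in> orth_group Kt. \<exists>Qt. similar_mat_wit Yt' Yt Pt Qt)"
  using fwd[OF Kt y1 Yt Yt'] bwd[OF Kt y1 vecs Yt Yt'] by blast

end
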